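(* Let $d\ge 2$ and let $\mathcal P$ and $\mathcal H$ be as defined in the context. Then $\operatorname{I}(\mathcal P,\mathcal H)\ \ge\ \left(1-\frac{2}{e^2}\right)2^{2d-2}$; in particular $\operatorname{I}(\mathcal P,\mathcal H)\ge\Omega(2^{2d})$.
   Context: Let $d\ge 2$. Define the point set $\mathcal P=\{(x_1,\dots,x_d): x_1,\dots,x_{d-1}\in\{-1,1\},\ x_d\in\mathbb Z,\ |x_d|\le 2\sqrt{d-1}\}$ and the hyperplane set $\mathcal H=\{\{x\in\mathbb R^d:\sum_{i=1}^d a_ix_i=0\}: a_1,\dots,a_{d-1}\in\{0,1\},\ a_d=-1\}$ (so $|\mathcal H|=2^{d-1}$). $\operatorname{I}(\mathcal P,\mathcal H)$ is the number of pairs $(p,h)\in\mathcal P\times\mathcal H$ with $p\in h$. *)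

theory Defs
  imports Complex_Main
begin

text \<open>Points of R^d are represented as real lists of length d; coordinate x_i of the
paper is the list entry at index i-1 (0-based).\<close>

definition pointset :: "nat \<Rightarrow> real list set" where
  "pointset d = {x. length x = d \<and> (\<forall>i < d - 1. x ! i \<in> {-1, 1})
      \<and> x ! (d - 1) \<in> \<int> \<and> \<bar>x ! (d - 1)\<bar> \<le> 2 * sqrt (real (d - 1))}"

definition hyperplane :: "nat \<Rightarrow> real list \<Rightarrow> real list set" where
  "hyperplane d a = {x. length x = d \<and> (\<Sum>i<d. a ! i * x ! i) = 0}"

definition hyperplaneset :: "nat \<Rightarrow> real list set set" where
  "hyperplaneset d = {hyperplane d a | a. length a = d \<and> (\<forall>i < d - 1. a ! i \<in> {0, 1})
      \<and> a ! (d - 1) = -1}"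

definition incidences :: "'a set \<Rightarrow> 'a set set \<Rightarrow> nat" where
  "incidences P H = card {(p, h). p \<in> P \<and> h \<in> H \<and> p \<in> h}"

end

theory Submission imports Defs begin
definition CC :: "(real\<times>real) set" where "CC = {(-1,0),(1,0),(-1,1),(1,1)}"
definition LL :: "nat \<Rightarrow> (real\<times>real) list set" where "LL n = {ps. set ps \<subseteq> CC \<and> length ps = n}"
definition ss :: "(real\<times>real) list \<Rightarrow> real" where "ss ps = sum_list (map (\<lambda>(x,a). a*x) ps)"

lemma finCC: "finite CC" by (simp add: CC_def)
lemma cardCC: "card CC = 4" by (simp add: CC_def)
lemma finLL: "finite (LL n)" unfolding LL_def using finite_lists_length_eq[OF finCC] by simp
lemma cardLL: "card (LL n) = 4^n" unfolding LL_def using card_lists_length_eq[OF finCC] cardCC by simp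

lemma LL_Suc: "LL (Suc n) = (\<lambda>(c,ps). c#ps) ` (CC \<times> LL n)"
  unfolding LL_def by (auto simp: length_Suc_conv image_iff)

lemma sumL: "(\<Sum>ps\<in>LL (Suc n). f ps) = (\<Sum>c\<in>CC. \<Sum>ps\<in>LL n. f (c#ps))"
proof -
  have inj: "inj_on (\<lambda>(c,ps). c#ps) (CC \<times> LL n)" by (auto simp: inj_on_def)
  have "(\<Sum>ps\<in>LL (Suc n). f ps) = (\<Sum>x\<in>CC \<times> LL n. f ((\<lambda>(c,ps). c#ps) x))"
    unfolding LL_Suc by (rule sum.reindex[OF inj, unfolded comp_def])
  also have "\<dots> = (\<Sum>c\<in>CC. \<Sum>ps\<in>LL n. f (c#ps))"
    by (subst sum.cartesian_product) (simp add: case_prod_beta)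
  finally show ?thesis .
qed

lemma ss_Cons: "ss (c#ps) = snd c * fst c + ss ps" by (simp add: ss_def case_prod_beta)

lemma sumC: "(\<Sum>c\<in>CC. g c) = g (-1,0) + g (1,0) + g (-1,1) + g (1,1)"
  by (simp add: CC_def add.assoc)

lemma M1: "(\<Sum>ps\<in>LL n. ss ps) = 0"
proof (induction n)
  case 0 then show ?case by (simp add: LL_def ss_def)
next
  case (Suc n)
  show ?case unfolding sumL ss_Cons sum.distrib sumC using Suc by simp
qed

lemma M2: "(\<Sum>ps\<in>LL n. (ss ps)^2) = real n * 4^n / 2"
proof (induction n)
  case 0 then show ?case by (simp add: LL_def ss_def)
next
  case (Suc n)
  have e: "\<And>c. (\<Sum>ps\<in>LL n. (snd c * fst c + ss ps)^2) = (snd c * fst c)^2 * 4^n + 2*(snd c*fst c) * (\<Sum>ps\<in>LL n. ss ps) + (\<Sum>ps\<in>LL n. (ss ps)^2)"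
    by (simp add: power2_eq_square algebra_simps sum.distrib sum_distrib_left cardLL)
  show ?case unfolding sumL ss_Cons e sumC M1 Suc by (simp add: field_simps)
qed
lemma dotapp: "length A = n \<Longrightarrow> length X = n \<Longrightarrow>
  (\<Sum>i<Suc n. (A@[a])!i*(X@[x])!i) = (\<Sum>i<n. A!i*X!i) + a*x"
  by (simp add: nth_append)

lemma hinj: assumes "length A = n" "length B = n"
  "hyperplane (Suc n) (A@[-1]) = hyperplane (Suc n) (B@[-1])" shows "A = B"
proof (rule nth_equalityI)
  show "length A = length B" using assms by simp
  fix i assume i: "i < length A"
  define Q where "Q = (replicate n (0::real))[i:=1]"
  have lq: "length Q = n" by (simp add: Q_def)
  have Qn: "\<And>j. j < n \<Longrightarrow> Q!j = (if j = i then 1 else 0)" using i assms(1) by (auto simp: Q_def nth_list_update)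
  have s: "\<And>C::real list. (\<Sum>j<n. C!j*Q!j) = C!i"
  proof -
    fix C :: "real list"
    have "(\<Sum>j<n. C!j*Q!j) = (\<Sum>j<n. if j = i then C!j else 0)" by (rule sum.cong) (auto simp: Qn)
    also have "\<dots> = C!i" using i assms(1) by simp
    finally show "(\<Sum>j<n. C!j*Q!j) = C!i" .
  qed
  have "Q @ [A!i] \<in> hyperplane (Suc n) (A@[-1])"
    unfolding hyperplane_def using dotapp[OF assms(1) lq] s lq by simp
  hence "Q @ [A!i] \<in> hyperplane (Suc n) (B@[-1])" using assms(3) by simp
  hence "B!i - A!i = 0" unfolding hyperplane_def using dotapp[OF assms(2) lq] s lq by simp
  thus "A!i = B!i" by simp
qed
lemma ss_nth: "ss ps = (\<Sum>i<length ps. map snd ps ! i * map fst ps ! i)"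
  unfolding ss_def sum_list_sum_nth by (simp add: atLeast0LessThan case_prod_beta)

lemma ss_Ints: "set ps \<subseteq> CC \<Longrightarrow> ss ps \<in> \<int>"
  by (induction ps) (auto simp: ss_def CC_def)

lemma exp2: "exp (2::real) \<le> 16"
proof -
  have "exp (2::real) = exp 1 * exp 1" by (simp flip: exp_add)
  also have "\<dots> \<le> 3 * 3" using exp_le by (intro mult_mono) auto
  finally show ?thesis by simp
qed

theorem proposition4p4:
  fixes d :: nat
  assumes "d \<ge> 2"
  shows "real (incidences (pointset d) (hyperplaneset d)) \<ge> (1 - 2 / exp 2) * 2 ^ (2 * d - 2)"
proof -
  define n where "n = d - 1"
  have dn: "d = Suc n" and n1: "n \<ge> 1" using assms by (auto simp: n_def)
  define G where "G = {ps \<in> LL n. \<bar>ss ps\<bar> \<le> 2 * sqrt (real n)}"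
  define B where "B = {ps \<in> LL n. \<not> \<bar>ss ps\<bar> \<le> 2 * sqrt (real n)}"
  define F where "F = (\<lambda>ps. (map fst ps @ [ss ps], hyperplane d (map snd ps @ [-1])))"
  define I where "I = {(p, h). p \<in> pointset d \<and> h \<in> hyperplaneset d \<and> p \<in> h}"
  have finI: "finite I"
  proof -
    have "finite (pointset d)"
    proof (rule finite_subset)
      show "pointset d \<subseteq> {x. set x \<subseteq> {-1,1} \<union> {of_int k | k. k \<in> {-(d::int)*d..d*d}} \<and> length x = d}"
      proof
        fix x assume x: "x \<in> pointset d"
        have "set x \<subseteq> {-1,1} \<union> {of_int k | k. k \<in> {-(d::int)*d..d*d}}"
        proof
          fix y assume "y \<in> set x"
          then obtain i where i: "i < length x" "y = x!i" by (auto simp: in_set_conv_nth)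
          show "y \<in> {-1,1} \<union> {of_int k | k. k \<in> {-(d::int)*d..d*d}}"
          proof (cases "i < d - 1")
            case True thus ?thesis using x i by (auto simp: pointset_def)
          next
            case False
            hence ie: "i = d - 1" using x i by (auto simp: pointset_def)
            obtain k where k: "y = of_int k" using x ie i by (auto simp: pointset_def elim: Ints_cases)
            have "sqrt (real (d-1)) \<le> sqrt (real d)" by simp
            also have "\<dots> \<le> real d"
            proof -
              have "real d \<le> (real d)^2" using assms by (simp add: power2_eq_square)
              hence "sqrt (real d) \<le> sqrt ((real d)^2)" by (rule real_sqrt_le_mono)
              thus ?thesis by simp
            qed
            finally have "\<bar>y\<bar> \<le> 2 * real d" using x ie i by (auto simp: pointset_def)
            hence "\<bar>k\<bar> \<le> 2 * int d" using k by linarith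
            moreover have "2 * int d \<le> int d * int d" using assms by (simp add: mult_right_mono)
            ultimately show ?thesis using k by auto
          qed
        qed
        thus "x \<in> {x. set x \<subseteq> {-1,1} \<union> {of_int k | k. k \<in> {-(d::int)*d..d*d}} \<and> length x = d}"
          using x by (simp add: pointset_def)
      qed
      show "finite {x. set x \<subseteq> {-1,1} \<union> {of_int k | k. k \<in> {-(d::int)*d..d*d}} \<and> length x = (d::nat)}"
        by (rule finite_lists_length_eq) simp
    qed
    moreover have "finite (hyperplaneset d)"
    proof -
      have "hyperplaneset d \<subseteq> hyperplane d ` {a. set a \<subseteq> {0,1,-1} \<and> length a = d}"
        unfolding hyperplaneset_def
      proof
        fix h assume "h \<in> {hyperplane d a | a. length a = d \<and> (\<forall>i < d - 1. a ! i \<in> {0, 1}) \<and> a ! (d - 1) = -1}"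
        then obtain a where a: "length a = d" "\<forall>i<d - 1. a ! i = 0 \<or> a ! i = 1" "a ! (d - 1) = - 1" and ha: "h = hyperplane d a" by auto
        have "set a \<subseteq> {0,1,-1}"
        proof
          fix y assume "y \<in> set a"
          then obtain i where i: "i < length a" "y = a!i" by (auto simp: in_set_conv_nth)
          show "y \<in> {0,1,-1}"
          proof (cases "i < d - 1")
            case True thus ?thesis using a i by auto
          next
            case False hence "i = d - 1" using a i by linarith
            thus ?thesis using a i by simp
          qed
        qed
        thus "h \<in> hyperplane d ` {a. set a \<subseteq> {0, 1, - 1} \<and> length a = d}" using a ha by auto
      qed
      moreover have "finite {a. set a \<subseteq> {0,1,-1::real} \<and> length a = d}" by (rule finite_lists_length_eq) simp
      ultimately show ?thesis by (metis finite_imageI finite_subset)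
    qed
    ultimately show ?thesis unfolding I_def by (rule finite_subset[rotated, OF finite_cartesian_product]) auto
  qed
  have FI: "F ` G \<subseteq> I"
  proof
    fix y assume "y \<in> F ` G"
    then obtain ps where ps: "ps \<in> G" "y = F ps" by auto
    have l: "length ps = n" and sc: "set ps \<subseteq> CC" and b: "\<bar>ss ps\<bar> \<le> 2 * sqrt (real n)"
      using ps by (auto simp: G_def LL_def)
    have p: "map fst ps @ [ss ps] \<in> pointset d"
      unfolding pointset_def
    proof (intro CollectI conjI allI impI)
      fix i assume "i < d - 1"
      hence "i < n" "ps!i \<in> CC" using l sc dn by auto
      thus "(map fst ps @ [ss ps]) ! i \<in> {-1,1}" using l by (auto simp: nth_append CC_def)
    qed (use l dn b ss_Ints[OF sc] in \<open>auto simp: nth_append\<close>)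
    have h: "hyperplane d (map snd ps @ [-1]) \<in> hyperplaneset d"
      unfolding hyperplaneset_def
    proof (intro CollectI exI conjI allI impI)
      fix i assume "i < d - 1"
      hence "i < n" "ps!i \<in> CC" using l sc dn by auto
      thus "(map snd ps @ [-1]) ! i \<in> {0,1}" using l by (auto simp: nth_append CC_def)
    qed (use l dn in \<open>auto simp: nth_append\<close>)
    have m: "map fst ps @ [ss ps] \<in> hyperplane d (map snd ps @ [-1])"
      unfolding hyperplane_def dn using dotapp[of "map snd ps" n "map fst ps"] l ss_nth[of ps] by simp
    show "y \<in> I" using p h m ps(2) by (simp add: I_def F_def)
  qed
  have injF: "inj_on F G"
  proof
    fix p q assume p: "p \<in> G" and q: "q \<in> G" and e: "F p = F q"
    have lp: "length p = n" and lq: "length q = n" using p q by (auto simp: G_def LL_def)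
    have "map snd p = map snd q"
      using hinj[of "map snd p" n "map snd q"] e lp lq by (simp add: F_def dn)
    moreover have "map fst p = map fst q" using e by (simp add: F_def)
    ultimately show "p = q" by (metis zip_map_fst_snd)
  qed
  have cI: "card G \<le> incidences (pointset d) (hyperplaneset d)"
    unfolding incidences_def I_def[symmetric]
    using card_inj_on_le[OF injF FI finI] .
  have GB: "card G + card B = 4^n"
  proof -
    have "G \<union> B = LL n" "G \<inter> B = {}" by (auto simp: G_def B_def)
    moreover have "finite G" "finite B" using finLL by (auto simp: G_def B_def)
    ultimately show ?thesis using card_Un_disjoint cardLL by metis
  qed
  have "real (card B) * (4 * real n) \<le> (\<Sum>ps\<in>B. (ss ps)^2)"
  proof -
    have "(\<Sum>ps\<in>B. 4 * real n) \<le> (\<Sum>ps\<in>B. (ss ps)^2)"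
    proof (rule sum_mono)
      fix ps assume "ps \<in> B"
      hence "2 * sqrt (real n) \<le> \<bar>ss ps\<bar>" by (auto simp: B_def)
      hence "(2 * sqrt (real n))^2 \<le> \<bar>ss ps\<bar>^2" by (rule power_mono) simp
      thus "4 * real n \<le> (ss ps)^2" by (simp add: power_mult_distrib)
    qed
    thus ?thesis by simp
  qed
  also have "\<dots> \<le> (\<Sum>ps\<in>LL n. (ss ps)^2)"
    by (rule sum_mono2[OF finLL]) (auto simp: B_def)
  also have "\<dots> = real n * 4^n / 2" by (rule M2)
  finally have "real (card B) * (4 * real n) \<le> real n * 4^n / 2" .
  hence cB: "real (card B) \<le> 4^n / 8" using n1 by (simp add: field_simps)
  have GB': "real (card G) + real (card B) = 4^n" using GB by (metis of_nat_add of_nat_numeral of_nat_power)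
  have cG: "real (card G) \<ge> 7/8 * 4^n" using GB' cB by linarith
  have pw: "(2::real) ^ (2 * d - 2) = 4 ^ n" by (simp add: dn power_mult)
  have "(1 - 2 / exp 2) \<le> (7/8::real)"
  proof -
    have "2 / 16 \<le> 2 / exp (2::real)" using exp2 by (intro divide_left_mono) auto
    thus ?thesis by simp
  qed
  hence "(1 - 2 / exp 2) * 2 ^ (2 * d - 2) \<le> 7/8 * (4::real)^n" unfolding pw by (intro mult_right_mono) auto
  also have "\<dots> \<le> real (card G)" by (rule cG)
  also have "\<dots> \<le> real (incidences (pointset d) (hyperplaneset d))" using cI by simp
  finally show ?thesis .
qed

end
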